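(* Let $k\geq2$ be an integer and let $(f(n))_{n\geq0}$ be a $k$-regular sequence over a field $\mathcal{S}\subseteq\mathbb{A}$ (the real algebraic numbers), with matrices $F_0,\dots,F_{k-1}$ of a minimal linear representation of it. Set $F(n)=F_{n_0}\cdots F_{n_{s-1}}$ for $(n)_k=n_{s-1}\cdots n_0$. Let $\sigma\in\mathbb{R}$, $\ell\in\mathbb{N}_0$, and $h(n)=n^\sigma(\log n)^\ell$. Then $f(n)\in O(h(n))$ if and only if $F(n)\in O(h(n))$. In particular, $(f(n))_{n\geq0}$ and $(F(n))_{n\geq0}$ have exactly the same growth rate.
   Context: For $n\in\mathbb{N}_0$, $(n)_k=n_{s-1}\cdots n_0$ is the standard base-$k$ representation of $n$ (no leading zeros; $(0)_k$ empty). A linear representation of $(f(n))_{n\geq0}$ consists of $r\geq0$, a $1\times r$ row vector $\lambda$, an $r\times1$ column vector $\gamma$ and $r\times r$ matrices $F_0,\dots,F_{k-1}$ over $\mathcal{S}$ with $f(n)=\lambda F_{n_0}\cdots F_{n_{s-1}}\gamma$ for all $n$; $f$ is $k$-regular if it has one, and the representation is minimal if $r$ is smallest possible for $f$. $f(n)\in O(g(n))$ means there exist $n_0$, $c>0$ with $|f(n)|\leq c\,g(n)$ for $n\geq n_0$; a sequence of matrices is in $O(g(n))$ if each entry sequence (fixed row and column) is, equivalently if the sequence of norms is. A sequence has exact growth $n^\sigma(\log n)^\ell$ if it is in $O(n^\sigma(\log n)^\ell)$ but not in $O(n^{\sigma'}(\log n)^{\ell'})$ for any $\sigma'\in\mathbb{R},\ell'\in\mathbb{N}_0$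 with $(\sigma',\ell')$ lexicographically smaller than $(\sigma,\ell)$. *)

theory Defs
  imports "HOL-Computational_Algebra.Polynomial" "HOL-Library.Landau_Symbols"
          "Jordan_Normal_Form.Matrix"
begin

fun base_digits :: "nat \<Rightarrow> nat \<Rightarrow> nat list" where
  "base_digits k n = (if n = 0 \<or> k < 2 then [] else n mod k # base_digits k (n div k))"

definition mat_of_n :: "nat \<Rightarrow> nat \<Rightarrow> (nat \<Rightarrow> real mat) \<Rightarrow> nat \<Rightarrow> real mat" where
  "mat_of_n k r Fs n = foldr (\<lambda>d M. Fs d * M) (base_digits k n) (1\<^sub>m r)"

definition subfield_of_real_algebraic :: "real set \<Rightarrow> bool" where
  "subfield_of_real_algebraic S \<longleftrightarrow>
     0 \<in> S \<and> 1 \<in> S \<and> (\<forall>x\<in>S. \<forall>y\<in>S. x + y \<in> S \<and> x * y \<in> S \<and> x - y \<in> S)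
     \<and> (\<forall>x\<in>S. x \<noteq> 0 \<longrightarrow> inverse x \<in> S) \<and> (\<forall>x\<in>S. algebraic x)"

definition mat_over :: "real set \<Rightarrow> real mat \<Rightarrow> bool" where
  "mat_over S M \<longleftrightarrow> (\<forall>i<dim_row M. \<forall>j<dim_col M. M $$ (i,j) \<in> S)"

definition is_linrep ::
  "real set \<Rightarrow> nat \<Rightarrow> (nat \<Rightarrow> real) \<Rightarrow> nat \<Rightarrow> real mat \<Rightarrow> real mat \<Rightarrow> (nat \<Rightarrow> real mat) \<Rightarrow> bool" where
  "is_linrep S k f r lam gam Fs \<longleftrightarrow>
     lam \<in> carrier_mat 1 r \<and> gam \<in> carrier_mat r 1 \<and> mat_over S lam \<and> mat_over S gam \<and>
     (\<forall>d<k. Fs d \<in> carrier_mat r r \<and> mat_over S (Fs d)) \<and>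
     (\<forall>n. f n = (lam * mat_of_n k r Fs n * gam) $$ (0,0))"

definition is_minimal_linrep ::
  "real set \<Rightarrow> nat \<Rightarrow> (nat \<Rightarrow> real) \<Rightarrow> nat \<Rightarrow> real mat \<Rightarrow> real mat \<Rightarrow> (nat \<Rightarrow> real mat) \<Rightarrow> bool" where
  "is_minimal_linrep S k f r lam gam Fs \<longleftrightarrow>
     is_linrep S k f r lam gam Fs \<and>
     (\<forall>r' lam' gam' Fs'. is_linrep S k f r' lam' gam' Fs' \<longrightarrow> r \<le> r')"

end

theory Submission imports Defs "HOL-Library.Function_Algebras" begin

definition sc :: "real \<Rightarrow> (nat \<Rightarrow> real) \<Rightarrow> (nat \<Rightarrow> real)" where "sc c x = (\<lambda>i. c * x i)"

interpretation V: vector_space sc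
  by unfold_locales (auto simp: sc_def fun_eq_iff algebra_simps)

lemma sc_apply: "sc c x i = c * x i" by (simp add: sc_def fun_eq_iff)

definition ev :: "nat \<Rightarrow> nat \<Rightarrow> real" where "ev i = (\<lambda>j. if j = i then 1 else 0)"

definition suppr :: "nat \<Rightarrow> (nat \<Rightarrow> real) \<Rightarrow> bool" where "suppr r x \<longleftrightarrow> (\<forall>i\<ge>r. x i = 0)"

lemma sum_fun_apply: "(\<Sum>s\<in>A. (g s :: nat \<Rightarrow> real)) i = (\<Sum>s\<in>A. g s i)"
  by (induction A rule: infinite_finite_induct) auto

lemma supp_in_span: assumes "suppr r x" shows "x \<in> V.span (ev ` {..<r})"
proof -
  have "x j = (\<Sum>i<r. sc (x i) (ev i)) j" for j
  proof -
    have "(\<Sum>i<r. sc (x i) (ev i)) j = (\<Sum>i<r. if j = i then x i else 0)"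
      unfolding sum_fun_apply sc_apply ev_def by (rule sum.cong) auto
    also have "\<dots> = (if j < r then x j else 0)" by (simp add: sum.delta[of _ j])
    also have "\<dots> = x j" using assms by (auto simp: suppr_def)
    finally show ?thesis by simp
  qed
  hence "x = (\<Sum>i<r. sc (x i) (ev i))" by (intro ext)
  also have "\<dots> \<in> V.span (ev ` {..<r})"
    by (intro V.span_sum V.span_scale V.span_base) auto
  finally show ?thesis .
qed

lemma G1: assumes "V.independent B" "\<forall>x\<in>B. suppr r x" shows "finite B \<and> card B \<le> r"
proof -
  have "card (ev ` {..<r}) \<le> r" using card_image_le[of "{..<r}" ev] by simp
  moreover have "B \<subseteq> V.span (ev ` {..<r})" using assms(2) supp_in_span by blast
  ultimately show ?thesis using V.independent_span_bound[of "ev ` {..<r}" B] assms(1) by auto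
qed

lemma G2: assumes "V.independent B" "\<forall>x\<in>B. suppr r x" "card B = r" "i < r"
  shows "ev i \<in> V.span B"
proof (rule ccontr)
  assume n: "ev i \<notin> V.span B"
  have fin: "finite B" using G1 assms by blast
  have "ev i \<notin> B" using n V.span_base by blast
  have "V.independent (insert (ev i) B)" using V.independent_insertI[OF n assms(1)] .
  moreover have "\<forall>x\<in>insert (ev i) B. suppr r x" using assms by (auto simp: suppr_def ev_def)
  ultimately have "card (insert (ev i) B) \<le> r" using G1 by blast
  with fin \<open>ev i \<notin> B\<close> assms(3) show False by simp
qed

definition Sv :: "real set \<Rightarrow> (nat \<Rightarrow> real) \<Rightarrow> bool" where "Sv S x \<longleftrightarrow> (\<forall>i. x i \<in> S)"

lemma sumS: assumes "subfield_of_real_algebraic S" and "\<And>s. s \<in> A \<Longrightarrow> h s \<in> S"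
  shows "sum h A \<in> S"
proof -
  have S0: "0 \<in> S" and Sp: "\<And>a b. a \<in> S \<Longrightarrow> b \<in> S \<Longrightarrow> a + b \<in> S"
    using assms(1) unfolding subfield_of_real_algebraic_def by blast+
  show ?thesis using assms(2)
    by (induction A rule: infinite_finite_induct) (auto simp: S0 Sp)
qed

lemma SOLVE0:
  assumes S: "subfield_of_real_algebraic S"
  shows "length bs = n \<Longrightarrow> \<forall>b\<in>set bs. Sv S b \<Longrightarrow> Sv S v \<Longrightarrow> v = (\<Sum>s<length bs. sc (c s) (bs!s)) \<Longrightarrow>
     \<exists>c'. (\<forall>s. c' s \<in> S) \<and> v = (\<Sum>s<length bs. sc (c' s) (bs!s))"
proof (induction n arbitrary: bs v c)
  case 0
  have "0 \<in> S" using S unfolding subfield_of_real_algebraic_def by blast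
  then show ?case using 0 by (intro exI[of _ "\<lambda>_. 0"]) simp
next
  case (Suc n)
  obtain bs0 x where bsx: "bs = bs0 @ [x]" using Suc.prems(1) by (cases bs rule: rev_cases) auto
  have len: "length bs0 = n" using Suc.prems(1) bsx by simp
  have p1: "\<forall>b\<in>set (bs0@[x]). Sv S b" and p2: "Sv S v"
    and p3: "v = (\<Sum>s<length (bs0@[x]). sc (c s) ((bs0@[x])!s))" using Suc.prems bsx by auto
  note IH = Suc.IH
  have "\<exists>c'. (\<forall>s. c' s \<in> S) \<and> v = (\<Sum>s<length (bs0@[x]). sc (c' s) ((bs0@[x])!s))"
  proof -
  have Sp: "\<And>a b. a \<in> S \<Longrightarrow> b \<in> S \<Longrightarrow> a + b \<in> S \<and> a * b \<in> S \<and> a - b \<in> S"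
    and Si: "\<And>a. a \<in> S \<Longrightarrow> a \<noteq> 0 \<Longrightarrow> inverse a \<in> S" and S0: "0 \<in> S"
    using S unfolding subfield_of_real_algebraic_def by blast+
  have Sd: "a / b \<in> S" if "a \<in> S" "b \<in> S" for a b
    using Sp[OF that(1) Si[OF that(2)]] that S0 by (cases "b = 0") (auto simp: divide_inverse)
  let ?t = "length bs0"
  have bsS: "\<forall>b\<in>set bs0. Sv S b" and xS: "Sv S x" using p1 by simp_all
  have v: "v = (\<Sum>s<?t. sc (c s) (bs0!s)) + sc (c ?t) x"
  proof -
    have e: "(\<Sum>s<?t. sc (c s) ((bs0@[x])!s)) = (\<Sum>s<?t. sc (c s) (bs0!s))"
      by (rule sum.cong) (auto simp: nth_append)
    have "v = (\<Sum>s<Suc ?t. sc (c s) ((bs0@[x])!s))" using p3 by (simp only: length_append_singleton)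
    also have "\<dots> = (\<Sum>s<?t. sc (c s) ((bs0@[x])!s)) + sc (c ?t) ((bs0@[x])!?t)"
      by (rule sum.lessThan_Suc)
    finally show ?thesis using e by simp
  qed
  show ?thesis
  proof (cases "x = 0")
    case True
    have "v = (\<Sum>s<?t. sc (c s) (bs0!s))" using v True by (simp add: sc_def fun_eq_iff)
    from IH[OF len bsS p2 this] obtain c' where
      c': "\<forall>s. c' s \<in> S" "v = (\<Sum>s<?t. sc (c' s) (bs0!s))" by blast
    define c2 where "c2 s = (if s < ?t then c' s else 0)" for s
    have e0: "(\<Sum>s<length (bs0@[x]). sc (c2 s) ((bs0@[x])!s)) = (\<Sum>s<?t. sc (c2 s) ((bs0@[x])!s)) + sc (c2 ?t) ((bs0@[x])!?t)"
      by (simp only: length_append_singleton sum.lessThan_Suc)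
    have e1: "(\<Sum>s<?t. sc (c2 s) ((bs0@[x])!s)) = (\<Sum>s<?t. sc (c' s) (bs0!s))"
      by (rule sum.cong) (auto simp: nth_append c2_def)
    have e2: "sc (c2 ?t) ((bs0@[x])!?t) = 0" using True by (simp add: sc_def c2_def fun_eq_iff)
    have "v = (\<Sum>s<length (bs0@[x]). sc (c2 s) ((bs0@[x])!s))"
      by (simp only: e0 e1 e2 c'(2) add_0_right)
    moreover have "\<forall>s. c2 s \<in> S" using c' S0 by (simp add: c2_def)
    ultimately show ?thesis by blast
  next
    case False
    have "\<exists>p. x p \<noteq> 0"
    proof (rule ccontr)
      assume "\<not> (\<exists>p. x p \<noteq> 0)"
      hence "x = 0" by (intro ext) simp
      with False show False by simp
    qed
    then obtain p where p: "x p \<noteq> 0" by blast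
    define g where "g b = b - sc (b p / x p) x" for b
    have gS: "Sv S (g b)" if "Sv S b" for b
      using that xS Sp Sd unfolding g_def Sv_def sc_def by simp
    have "g v = (\<Sum>s<?t. sc (c s) (g (bs0!s)))"
    proof
      fix i
      have vi: "v i = (\<Sum>s<?t. c s * (bs0!s) i) + c ?t * x i" for i
        using v by (simp add: sum_fun_apply sc_apply)
      have vpx: "v p / x p = (\<Sum>s<?t. c s * ((bs0!s) p / x p)) + c ?t"
        unfolding vi using p by (simp add: add_divide_distrib sum_divide_distrib)
      have "g v i = v i - (v p / x p) * x i" by (simp add: g_def sc_apply)
      also have "\<dots> = (\<Sum>s<?t. c s * (bs0!s) i) - (\<Sum>s<?t. c s * ((bs0!s) p / x p)) * x i"
        unfolding vpx vi[of i] by (simp add: algebra_simps)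
      also have "\<dots> = (\<Sum>s<?t. c s * ((bs0!s) i - (bs0!s) p / x p * x i))"
        by (simp add: sum_distrib_right sum_subtractf right_diff_distrib mult.assoc)
      also have "\<dots> = (\<Sum>s<?t. sc (c s) (g (bs0!s))) i"
        by (simp add: sum_fun_apply sc_apply g_def)
      finally show "g v i = (\<Sum>s<?t. sc (c s) (g (bs0!s))) i" .
    qed
    hence "g v = (\<Sum>s<length (map g bs0). sc (c s) (map g bs0 ! s))" by simp
    from IH[OF _ _ gS[OF p2] this] len bsS gS obtain c' where
      c': "\<forall>s. c' s \<in> S" "g v = (\<Sum>s<?t. sc (c' s) (g (bs0!s)))" by auto
    define a where "a = v p / x p - (\<Sum>s<?t. c' s * ((bs0!s) p / x p))"
    have aS: "a \<in> S" unfolding a_def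
    proof (rule Sp[THEN conjunct2, THEN conjunct2])
      show "v p / x p \<in> S" using p2 xS Sd by (simp add: Sv_def)
      show "(\<Sum>s<?t. c' s * ((bs0!s) p / x p)) \<in> S"
      proof (rule sumS[OF S])
        fix s assume "s \<in> {..<?t}"
        hence "bs0!s \<in> set bs0" by simp
        hence "(bs0!s) p \<in> S" using bsS by (simp add: Sv_def)
        thus "c' s * ((bs0!s) p / x p) \<in> S" using c'(1) Sp Sd xS by (simp add: Sv_def)
      qed
    qed
    define c2 where "c2 s = (if s < ?t then c' s else a)" for s
    have "v = (\<Sum>s<length (bs0@[x]). sc (c2 s) ((bs0@[x])!s))"
    proof
      fix i
      have e0: "(\<Sum>s<length (bs0@[x]). sc (c2 s) ((bs0@[x])!s)) = (\<Sum>s<?t. sc (c2 s) ((bs0@[x])!s)) + sc (c2 ?t) ((bs0@[x])!?t)"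
        by (simp only: length_append_singleton sum.lessThan_Suc)
      have e1: "(\<Sum>s<?t. sc (c2 s) ((bs0@[x])!s)) = (\<Sum>s<?t. sc (c' s) (bs0!s))"
        by (rule sum.cong) (auto simp: nth_append c2_def)
      have e2: "sc (c2 ?t) ((bs0@[x])!?t) = sc a x" by (simp add: c2_def)
      have gvi: "g v i = (\<Sum>s<?t. c' s * ((bs0!s) i - (bs0!s) p / x p * x i))"
        using c'(2) by (simp add: sum_fun_apply sc_apply g_def)
      have "v i = g v i + v p / x p * x i" by (simp add: g_def sc_apply)
      also have "\<dots> = (\<Sum>s<?t. c' s * (bs0!s) i) - (\<Sum>s<?t. c' s * ((bs0!s) p / x p)) * x i + v p / x p * x i"
        unfolding gvi by (simp add: sum_distrib_right sum_subtractf right_diff_distrib mult.assoc)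
      also have "\<dots> = (\<Sum>s<?t. c' s * (bs0!s) i) + a * x i"
        by (simp add: a_def algebra_simps)
      also have "\<dots> = (\<Sum>s<length (bs0@[x]). sc (c2 s) ((bs0@[x])!s)) i"
        unfolding e0 e1 e2 by (simp add: sum_fun_apply sc_apply)
      finally show "v i = (\<Sum>s<length (bs0@[x]). sc (c2 s) ((bs0@[x])!s)) i" .
    qed
    moreover have "\<forall>s. c2 s \<in> S" using c'(1) aS by (simp add: c2_def)
    ultimately show ?thesis by blast
  qed
  qed
  thus ?case unfolding bsx .
qed

lemma SOLVE:
  assumes "subfield_of_real_algebraic S" "\<forall>b\<in>set bs. Sv S b" "Sv S v" "v = (\<Sum>s<length bs. sc (c s) (bs!s))"
  shows "\<exists>c'. (\<forall>s. c' s \<in> S) \<and> v = (\<Sum>s<length bs. sc (c' s) (bs!s))"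
  using SOLVE0[OF assms(1) refl assms(2-)] .

lemma cmult_O: "f \<in> O[F](h) \<Longrightarrow> (\<lambda>x. (c::real) * f x) \<in> O[F](h)"
  by (cases "c = 0") simp_all

lemma h_bound:
  fixes \<sigma> :: real and k K :: nat
  assumes "k \<ge> 1" "K \<ge> 1" "x \<ge> real k" "x \<ge> real K" "x / real k \<le> y" "y \<le> real K * x"
  shows "\<bar>y powr \<sigma> * ln y ^ l\<bar> \<le> ((real K) powr \<sigma> + (real k) powr (-\<sigma>)) * 2 ^ l * \<bar>x powr \<sigma> * ln x ^ l\<bar>"
proof -
  have k0: "real k > 0" and K0: "real K \<ge> 1" using assms by auto
  have x1: "x \<ge> 1" using assms(1,3) by linarith
  have "real k * 1 \<le> real k * y"
  proof -
    have "x \<le> real k * y" using assms(5) k0 by (simp add: field_simps mult.commute)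
    thus ?thesis using assms(3) by linarith
  qed
  hence y1: "y \<ge> 1" using k0 by (simp only: mult_le_cancel_left_pos)
  have x0: "x > 0" and y0: "y > 0" using x1 y1 by auto
  have lnx: "ln x \<ge> 0" and lny: "ln y \<ge> 0" using x1 y1 by auto
  have "ln y \<le> ln (real K * x)" using assms(6) y0 by simp
  also have "\<dots> = ln (real K) + ln x" using K0 x0 by (simp add: ln_mult)
  also have "\<dots> \<le> 2 * ln x" using assms(4) K0 by simp
  finally have lny2: "ln y \<le> 2 * ln x" .
  have p1: "ln y ^ l \<le> 2 ^ l * ln x ^ l"
    using power_mono[OF lny2 lny, of l] by (simp add: power_mult_distrib)
  have p2: "y powr \<sigma> \<le> ((real K) powr \<sigma> + (real k) powr (-\<sigma>)) * x powr \<sigma>"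
  proof (cases "\<sigma> \<ge> 0")
    case True
    have "y powr \<sigma> \<le> (real K * x) powr \<sigma>" using powr_mono2[OF True] y0 assms(6) by simp
    also have "\<dots> = real K powr \<sigma> * x powr \<sigma>" using K0 x0 by (simp add: powr_mult)
    also have "\<dots> \<le> ((real K) powr \<sigma> + (real k) powr (-\<sigma>)) * x powr \<sigma>"
      by (intro mult_right_mono) auto
    finally show ?thesis .
  next
    case False
    have "y powr \<sigma> \<le> (x / real k) powr \<sigma>"
      using powr_mono2'[of \<sigma> "x / real k" y] False x0 k0 assms(5) by simp
    also have "\<dots> = real k powr (-\<sigma>) * x powr \<sigma>" using k0 x0
      by (simp add: powr_divide powr_minus divide_simps)
    also have "\<dots> \<le> ((real K) powr \<sigma> + (real k) powr (-\<sigma>)) * x powr \<sigma>"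
      by (intro mult_right_mono) auto
    finally show ?thesis .
  qed
  have "\<bar>y powr \<sigma> * ln y ^ l\<bar> = y powr \<sigma> * ln y ^ l" using lny by simp
  also have "\<dots> \<le> (((real K) powr \<sigma> + (real k) powr (-\<sigma>)) * x powr \<sigma>) * (2 ^ l * ln x ^ l)"
    by (intro mult_mono p1 p2) (auto simp: lny)
  also have "\<dots> = ((real K) powr \<sigma> + (real k) powr (-\<sigma>)) * 2 ^ l * \<bar>x powr \<sigma> * ln x ^ l\<bar>"
    using lnx by simp
  finally show ?thesis .
qed

lemma growth_comp:
  fixes f :: "nat \<Rightarrow> real" and m :: "nat \<Rightarrow> nat" and k K :: nat
  assumes f: "f \<in> O(\<lambda>n. real n powr \<sigma> * ln (real n) ^ l)" and k: "k \<ge> 1" and K: "K \<ge> 1"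
    and mb: "\<And>n. n \<ge> 1 \<Longrightarrow> n \<le> k * m n \<and> m n \<le> K * n"
  shows "(\<lambda>n. f (m n)) \<in> O(\<lambda>n. real n powr \<sigma> * ln (real n) ^ l)"
proof -
  let ?h = "\<lambda>n::nat. real n powr \<sigma> * ln (real n) ^ l"
  have lim: "filterlim m at_top at_top"
    unfolding filterlim_at_top
  proof
    fix Z
    show "eventually (\<lambda>n. Z \<le> m n) at_top"
      unfolding eventually_at_top_linorder
    proof (intro exI allI impI)
      fix n assume "k * Z + 1 \<le> n"
      hence "n \<ge> 1" "k * Z < n" by auto
      have "n \<le> k * m n" using mb[of n] \<open>n \<ge> 1\<close> by blast
      hence "k * Z < k * m n" using \<open>k * Z < n\<close> by linarith
      thus "Z \<le> m n" using k by auto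
    qed
  qed
  have 1: "(\<lambda>n. f (m n)) \<in> O(\<lambda>n. ?h (m n))"
    using landau_o.big.compose[OF f lim] .
  have 2: "(\<lambda>n. ?h (m n)) \<in> O(?h)"
  proof (rule landau_o.bigI[of "((real K) powr \<sigma> + (real k) powr (-\<sigma>)) * 2 ^ l"])
    show "0 < ((real K) powr \<sigma> + (real k) powr (-\<sigma>)) * 2 ^ l"
      using k by (intro mult_pos_pos add_nonneg_pos) auto
    show "eventually (\<lambda>n. norm (?h (m n)) \<le> ((real K) powr \<sigma> + (real k) powr (-\<sigma>)) * 2 ^ l * norm (?h n)) at_top"
      unfolding eventually_at_top_linorder
    proof (intro exI allI impI)
      fix n assume n: "k + K \<le> n"
      hence "n \<ge> 1" using k by simp
      with mb[of n] have a: "n \<le> k * m n" "m n \<le> K * n" by auto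
      have "real n \<le> real k * real (m n)" using a(1) by (metis of_nat_le_iff of_nat_mult)
      hence b: "real n / real k \<le> real (m n)" using k by (simp add: field_simps)
      have c: "real (m n) \<le> real K * real n" using a(2) by (metis of_nat_le_iff of_nat_mult)
      show "norm (?h (m n)) \<le> ((real K) powr \<sigma> + (real k) powr (-\<sigma>)) * 2 ^ l * norm (?h n)"
        using h_bound[OF k K _ _ b c, of \<sigma> l] n by simp
    qed
  qed
  show ?thesis using landau_o.big.trans[OF 1 2] .
qed

declare base_digits.simps[simp del]

definition val :: "nat \<Rightarrow> nat list \<Rightarrow> nat" where
  "val k ds = foldr (\<lambda>d acc. d + k * acc) ds 0"

lemma val_Nil[simp]: "val k [] = 0" and val_Cons[simp]: "val k (d # ds) = d + k * val k ds"
  by (simp_all add: val_def)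

definition valid :: "nat \<Rightarrow> nat list \<Rightarrow> bool" where
  "valid k ds \<longleftrightarrow> (\<forall>d\<in>set ds. d < k) \<and> (ds = [] \<or> last ds \<noteq> 0)"

lemma bd_0[simp]: "base_digits k 0 = []" by (simp add: base_digits.simps)

lemma bd_pos: "k \<ge> 2 \<Longrightarrow> n > 0 \<Longrightarrow> base_digits k n = n mod k # base_digits k (n div k)"
  by (subst base_digits.simps) simp

lemma val_bd: "k \<ge> 2 \<Longrightarrow> val k (base_digits k n) = n"
proof (induction n rule: less_induct)
  case (less n)
  show ?case
  proof (cases "n = 0")
    case False
    have "n div k < n" using False less.prems by simp
    hence IH: "val k (base_digits k (n div k)) = n div k" using less.IH less.prems by blast
    have "base_digits k n = n mod k # base_digits k (n div k)" using bd_pos less.prems False by blast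
    hence "val k (base_digits k n) = n mod k + k * (n div k)" using IH by simp
    thus ?thesis by simp
  qed simp
qed

lemma bd_valid: "k \<ge> 2 \<Longrightarrow> valid k (base_digits k n)"
proof (induction n rule: less_induct)
  case (less n)
  show ?case
  proof (cases "n = 0")
    case True thus ?thesis by (simp add: valid_def)
  next
    case False
    have lt: "n div k < n" using False less.prems by simp
    have IH: "valid k (base_digits k (n div k))" using less.IH lt less.prems by blast
    have eq: "base_digits k n = n mod k # base_digits k (n div k)" using bd_pos less.prems False by blast
    have mk: "n mod k < k" using less.prems by simp
    show ?thesis
    proof (cases "n div k = 0")
      case True
      have "n div k * k + n mod k = n" by (rule div_mult_mod_eq)
      hence "n mod k = n" using True by simp
      hence "n mod k \<noteq> 0" using False by simp
      thus ?thesis unfolding eq using True mk by (simp add: valid_def)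
    next
      case nz: False
      have "base_digits k (n div k) = n div k mod k # base_digits k (n div k div k)"
        using nz less.prems by (intro bd_pos) auto
      hence ne: "base_digits k (n div k) \<noteq> []" by (rule ssubst) (rule list.distinct(2))
      show ?thesis unfolding eq using IH ne mk unfolding valid_def by auto
    qed
  qed
qed

lemma val_0_valid: "valid k ds \<Longrightarrow> val k ds = 0 \<Longrightarrow> ds = []"
proof (induction ds)
  case (Cons d ds)
  have k: "k > 0" using Cons.prems by (auto simp: valid_def)
  have "d = 0" "val k ds = 0" using Cons.prems k by auto
  show ?case
  proof (cases "ds = []")
    case True thus ?thesis using Cons.prems \<open>d = 0\<close> by (simp add: valid_def)
  next
    case False
    have "valid k ds" using Cons.prems False by (simp add: valid_def)
    thus ?thesis using Cons.IH \<open>val k ds = 0\<close> False by simp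
  qed
qed simp

lemma bd_val: "k \<ge> 2 \<Longrightarrow> valid k ds \<Longrightarrow> base_digits k (val k ds) = ds"
proof (induction ds)
  case (Cons d ds)
  have d: "d < k" using Cons.prems by (simp add: valid_def)
  have vds: "valid k ds" using Cons.prems by (cases ds) (auto simp: valid_def)
  show ?case
  proof (cases "val k (d # ds) = 0")
    case True
    hence "d # ds = []" using val_0_valid Cons.prems(2) by blast
    thus ?thesis by simp
  next
    case False
    have m: "(d + k * val k ds) mod k = d" "(d + k * val k ds) div k = val k ds"
      using d by auto
    show ?thesis using False Cons.prems Cons.IH[OF Cons.prems(1) vds]
      by (simp add: bd_pos m d)
  qed
qed simp

lemma val_less: "k \<ge> 1 \<Longrightarrow> \<forall>d\<in>set ds. d < k \<Longrightarrow> val k ds < k ^ length ds"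
proof (induction ds)
  case (Cons d ds)
  have "val k ds + 1 \<le> k ^ length ds" using Cons by simp
  hence A: "k * (val k ds + 1) \<le> k * k ^ length ds" by (rule mult_le_mono2)
  have "d < k" using Cons.prems by simp
  hence "d + k * val k ds < k * (val k ds + 1)" by (simp add: algebra_simps)
  thus ?case using A by simp
qed simp

lemma val_ge: "k \<ge> 1 \<Longrightarrow> valid k ds \<Longrightarrow> ds \<noteq> [] \<Longrightarrow> k ^ (length ds - 1) \<le> val k ds"
proof (induction ds)
  case (Cons d ds)
  show ?case
  proof (cases "ds = []")
    case True thus ?thesis using Cons.prems by (simp add: valid_def)
  next
    case False
    have "valid k ds" using Cons.prems False by (simp add: valid_def)
    hence "k ^ (length ds - 1) \<le> val k ds" using Cons False by simp
    hence A: "k * k ^ (length ds - 1) \<le> k * val k ds" by (rule mult_le_mono2)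
    have B: "k * k ^ (length ds - 1) = k ^ (length (d # ds) - 1)"
      using False by (cases ds) auto
    have X: "k ^ (length (d # ds) - 1) \<le> k * val k ds" using A unfolding B .
    show ?thesis using X by (simp add: trans_le_add2)
  qed
qed simp

lemma valid_app: "\<forall>d\<in>set w. d < k \<Longrightarrow> valid k ds \<Longrightarrow> ds \<noteq> [] \<Longrightarrow> valid k vv \<Longrightarrow> valid k (w @ ds @ vv)"
  by (auto simp: valid_def last_append)

lemma bd_bounds:
  assumes k: "k \<ge> 2" and n: "n \<ge> 1" and w: "\<forall>d\<in>set w. d < k" and vv: "valid k vv"
  defines "m \<equiv> val k (w @ base_digits k n @ vv)"
  shows "n \<le> k * m \<and> m \<le> k ^ (length w + length vv + 1) * n"
proof -
  let ?ds = "base_digits k n"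
  have vds: "valid k ?ds" using bd_valid k by blast
  have ne: "?ds \<noteq> []" using n k by (simp add: bd_pos)
  have vall: "valid k (w @ ?ds @ vv)" using valid_app[OF w vds ne vv] .
  have nv: "n = val k ?ds" using val_bd k by simp
  have n1: "n < k ^ length ?ds" using val_less[of k ?ds] k vds nv by (simp add: valid_def)
  have n2: "k ^ (length ?ds - 1) \<le> n" using val_ge[of k ?ds] k vds ne nv by simp
  have m1: "k ^ (length (w @ ?ds @ vv) - 1) \<le> m" unfolding m_def using val_ge[OF _ vall] k ne by simp
  have "\<forall>d\<in>set (w @ ?ds @ vv). d < k" using vall by (simp add: valid_def)
  hence m2: "m < k ^ length (w @ ?ds @ vv)" unfolding m_def using k by (intro val_less) auto
  have "k ^ length ?ds \<le> k ^ (length (w @ ?ds @ vv) - 1 + 1)"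
    using k by (intro power_increasing) auto
  also have "\<dots> = k * k ^ (length (w @ ?ds @ vv) - 1)" by simp
  also have "\<dots> \<le> k * m" using m1 by simp
  finally have A: "n \<le> k * m" using n1 by simp
  have L: "length (w @ ?ds @ vv) = length w + length vv + length ?ds" by simp
  have "m \<le> k ^ (length w + length vv + length ?ds)" using m2 unfolding L by simp
  also have "\<dots> = k ^ (length w + length vv + 1) * k ^ (length ?ds - 1)"
    using ne by (cases ?ds) (auto simp: power_add)
  also have "\<dots> \<le> k ^ (length w + length vv + 1) * n" using n2 by simp
  finally show ?thesis using A by simp
qed

definition pw :: "nat \<Rightarrow> (nat \<Rightarrow> real mat) \<Rightarrow> nat list \<Rightarrow> real mat" where
  "pw r Fs u = foldr (\<lambda>d M. Fs d * M) u (1\<^sub>m r)"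

lemma pw_Nil[simp]: "pw r Fs [] = 1\<^sub>m r" and pw_Cons[simp]: "pw r Fs (d # u) = Fs d * pw r Fs u"
  by (simp_all add: pw_def)

lemma mat_of_n_pw: "mat_of_n k r Fs n = pw r Fs (base_digits k n)"
  by (simp add: mat_of_n_def pw_def)

lemma pw_carrier: "\<forall>d\<in>set u. Fs d \<in> carrier_mat r r \<Longrightarrow> pw r Fs u \<in> carrier_mat r r"
  by (induction u) auto

lemma pw_append: "\<forall>d\<in>set u. Fs d \<in> carrier_mat r r \<Longrightarrow> \<forall>d\<in>set v. Fs d \<in> carrier_mat r r \<Longrightarrow>
   pw r Fs (u @ v) = pw r Fs u * pw r Fs v"
proof (induction u)
  case Nil
  then show ?case using pw_carrier[of v Fs r] by simp
next
  case (Cons d u)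
  have "Fs d \<in> carrier_mat r r" using Cons by simp
  moreover have "pw r Fs u \<in> carrier_mat r r" "pw r Fs v \<in> carrier_mat r r"
    using Cons pw_carrier by auto
  ultimately show ?case using Cons by (simp add: assoc_mult_mat[of "Fs d" r r "pw r Fs u" r "pw r Fs v" r])
qed

definition rowv :: "real mat \<Rightarrow> nat \<Rightarrow> real" where
  "rowv A = (\<lambda>j. if j < dim_col A then A $$ (0,j) else 0)"
definition colv :: "real mat \<Rightarrow> nat \<Rightarrow> real" where
  "colv A = (\<lambda>i. if i < dim_row A then A $$ (i,0) else 0)"
definition bil :: "nat \<Rightarrow> (nat \<Rightarrow> real) \<Rightarrow> real mat \<Rightarrow> (nat \<Rightarrow> real) \<Rightarrow> real" where
  "bil r x M y = (\<Sum>p<r. \<Sum>q<r. x p * M $$ (p,q) * y q)"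

lemma trip:
  assumes "A \<in> carrier_mat 1 r" "M \<in> carrier_mat r r" "C \<in> carrier_mat r 1"
  shows "(A * M * C) $$ (0,0) = bil r (rowv A) M (colv C)"
proof -
  have "(A * M * C) $$ (0,0) = (\<Sum>p<r. A $$ (0,p) * (\<Sum>q<r. M $$ (p,q) * C $$ (q,0)))"
    using assms by (simp add: index_mult_mat scalar_prod_def lessThan_atLeast0)
  also have "\<dots> = (\<Sum>p<r. \<Sum>q<r. A $$ (0,p) * M $$ (p,q) * C $$ (q,0))"
    by (simp add: sum_distrib_left mult.assoc)
  also have "\<dots> = bil r (rowv A) M (colv C)"
    using assms by (simp add: bil_def rowv_def colv_def)
  finally show ?thesis .
qed

lemma bil_ev: "i < r \<Longrightarrow> j < r \<Longrightarrow> bil r (ev i) M (ev j) = M $$ (i,j)"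
proof -
  assume ij: "i < r" "j < r"
  have X: "ev i p * M $$ (p,q) * ev j q = (if p = i \<and> q = j then M $$ (i,j) else 0)" for p q
    by (simp add: ev_def)
  have Y: "(\<Sum>q<r. if p = i \<and> q = j then M $$ (i,j) else 0) = (if p = i then M $$ (i,j) else 0)" for p
    using ij by (cases "p = i") (simp_all add: sum.delta)
  have "bil r (ev i) M (ev j) = (\<Sum>p<r. if p = i then M $$ (i,j) else 0)"
    unfolding bil_def X Y ..
  also have "\<dots> = M $$ (i,j)" using ij by (simp add: sum.delta)
  finally show ?thesis .
qed

lemma bil_add1: "bil r (x + x') M y = bil r x M y + bil r x' M y"
  by (simp add: bil_def algebra_simps sum.distrib)
lemma bil_sc1: "bil r (sc c x) M y = c * bil r x M y"
  by (simp add: bil_def sc_apply sum_distrib_left algebra_simps)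
lemma bil_zero1: "bil r 0 M y = 0"
  by (simp add: bil_def)
lemma bil_add2: "bil r x M (y + y') = bil r x M y + bil r x M y'"
  by (simp add: bil_def algebra_simps sum.distrib)
lemma bil_sc2: "bil r x M (sc c y) = c * bil r x M y"
  by (simp add: bil_def sc_apply sum_distrib_left algebra_simps)
lemma bil_zero2: "bil r x M 0 = 0"
  by (simp add: bil_def)

lemma span_lincomb:
  assumes "v \<in> V.span (set bs)"
  shows "\<exists>c. v = (\<Sum>s<length bs. sc (c s) (bs!s))"
proof -
  let ?P = "{v. \<exists>c. v = (\<Sum>s<length bs. sc (c s) (bs!s))}"
  have "V.subspace ?P"
    unfolding V.subspace_def
  proof (intro conjI ballI allI)
    show "0 \<in> ?P"
      by (auto intro!: exI[of _ "\<lambda>_. 0"] ext simp: sum_fun_apply sc_apply)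
  next
    fix x y assume "x \<in> ?P" "y \<in> ?P"
    then obtain c1 c2 where c: "x = (\<Sum>s<length bs. sc (c1 s) (bs!s))" "y = (\<Sum>s<length bs. sc (c2 s) (bs!s))"
      by blast
    have "x + y = (\<Sum>s<length bs. sc (c1 s + c2 s) (bs!s))"
      unfolding c by (rule ext) (simp add: sum_fun_apply sc_apply algebra_simps sum.distrib)
    thus "x + y \<in> ?P" by (intro CollectI exI[of _ "\<lambda>s. c1 s + c2 s"])
  next
    fix a x assume "x \<in> ?P"
    then obtain c1 where c: "x = (\<Sum>s<length bs. sc (c1 s) (bs!s))" by blast
    have "sc a x = (\<Sum>s<length bs. sc (a * c1 s) (bs!s))"
      unfolding c by (rule ext) (simp add: sum_fun_apply sc_apply sum_distrib_left algebra_simps)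
    thus "sc a x \<in> ?P" by (intro CollectI exI[of _ "\<lambda>s. a * c1 s"])
  qed
  moreover have "set bs \<subseteq> ?P"
  proof
    fix b assume "b \<in> set bs"
    then obtain s0 where s0: "s0 < length bs" "bs!s0 = b" by (auto simp: in_set_conv_nth)
    have "b = (\<Sum>s<length bs. sc (if s = s0 then 1 else 0) (bs!s))"
    proof (rule ext)
      fix i
      have "(\<Sum>s<length bs. sc (if s = s0 then 1 else 0) (bs!s)) i = (\<Sum>s<length bs. if s = s0 then (bs!s) i else 0)"
        unfolding sum_fun_apply sc_apply by (intro sum.cong refl) auto
      also have "\<dots> = b i" using s0 by (simp add: sum.delta)
      finally show "b i = (\<Sum>s<length bs. sc (if s = s0 then 1 else 0) (bs!s)) i" by simp
    qed
    thus "b \<in> ?P" by (intro CollectI exI[of _ "\<lambda>s. if s = s0 then 1 else 0"])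
  qed
  ultimately have "V.span (set bs) \<subseteq> ?P" by (rule V.span_minimal[rotated])
  thus ?thesis using assms by blast
qed

lemma Sfacts:
  assumes "subfield_of_real_algebraic S"
  shows "0 \<in> S" "1 \<in> S" "\<And>a b. a \<in> S \<Longrightarrow> b \<in> S \<Longrightarrow> a + b \<in> S"
    "\<And>a b. a \<in> S \<Longrightarrow> b \<in> S \<Longrightarrow> a * b \<in> S"
  using assms unfolding subfield_of_real_algebraic_def by blast+

lemma mat_over_mult:
  assumes S: "subfield_of_real_algebraic S" and "mat_over S A" "mat_over S B" "dim_col A = dim_row B"
  shows "mat_over S (A * B)"
  unfolding mat_over_def
proof (intro allI impI)
  fix i j assume ij: "i < dim_row (A * B)" "j < dim_col (A * B)"
  have "(A * B) $$ (i,j) = (\<Sum>p\<in>{0..<dim_row B}. A $$ (i,p) * B $$ (p,j))"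
    using ij assms(4) by (auto simp: index_mult_mat scalar_prod_def intro!: sum.cong)
  also have "\<dots> \<in> S"
    using ij assms(2-4) Sfacts[OF S] by (intro sumS[OF S]) (auto simp: mat_over_def)
  finally show "(A * B) $$ (i,j) \<in> S" .
qed

lemma mat_over_one: "subfield_of_real_algebraic S \<Longrightarrow> mat_over S (1\<^sub>m r)"
  using Sfacts by (auto simp: mat_over_def)

lemma pw_over:
  assumes S: "subfield_of_real_algebraic S" and "\<forall>d\<in>set u. Fs d \<in> carrier_mat r r \<and> mat_over S (Fs d)"
  shows "mat_over S (pw r Fs u)"
  using assms(2)
proof (induction u)
  case Nil thus ?case using mat_over_one[OF S] by simp
next
  case (Cons d u)
  have "pw r Fs u \<in> carrier_mat r r" using Cons.prems pw_carrier by auto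
  thus ?case using Cons by (auto intro!: mat_over_mult[OF S])
qed

lemma Sv_rowv: "subfield_of_real_algebraic S \<Longrightarrow> mat_over S A \<Longrightarrow> dim_row A > 0 \<Longrightarrow> Sv S (rowv A)"
  using Sfacts by (auto simp: Sv_def rowv_def mat_over_def)
lemma Sv_colv: "subfield_of_real_algebraic S \<Longrightarrow> mat_over S A \<Longrightarrow> dim_col A > 0 \<Longrightarrow> Sv S (colv A)"
  using Sfacts by (auto simp: Sv_def colv_def mat_over_def)

definition vecmat :: "nat \<Rightarrow> (nat \<Rightarrow> real) \<Rightarrow> real mat \<Rightarrow> nat \<Rightarrow> real" where
  "vecmat r x M = (\<lambda>j. if j < r then (\<Sum>p<r. x p * M $$ (p,j)) else 0)"
definition matvec :: "nat \<Rightarrow> real mat \<Rightarrow> (nat \<Rightarrow> real) \<Rightarrow> nat \<Rightarrow> real" where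
  "matvec r M y = (\<lambda>i. if i < r then (\<Sum>q<r. M $$ (i,q) * y q) else 0)"

lemma rowv_mult: "A \<in> carrier_mat 1 r \<Longrightarrow> M \<in> carrier_mat r r \<Longrightarrow> rowv (A * M) = vecmat r (rowv A) M"
  by (rule ext) (auto simp: rowv_def vecmat_def index_mult_mat scalar_prod_def lessThan_atLeast0 intro!: sum.cong)
lemma colv_mult: "M \<in> carrier_mat r r \<Longrightarrow> C \<in> carrier_mat r 1 \<Longrightarrow> colv (M * C) = matvec r M (colv C)"
  by (rule ext) (auto simp: colv_def matvec_def index_mult_mat scalar_prod_def lessThan_atLeast0 intro!: sum.cong)

definition VL :: "nat \<Rightarrow> nat \<Rightarrow> real mat \<Rightarrow> (nat \<Rightarrow> real mat) \<Rightarrow> (nat \<Rightarrow> real) set" where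
  "VL k r lam Fs = {rowv (lam * pw r Fs w) | w. set w \<subseteq> {..<k}}"

lemma some_coeffs:
  assumes "\<exists>c. P c"
  shows "P (SOME c. P c)"
  using assms by (rule someI_ex)

lemma CL:
  assumes S: "subfield_of_real_algebraic S" and rep: "is_linrep S k f r lam gam Fs" and k: "k \<ge> 2"
    and bsV: "set bs \<subseteq> VL k r lam Fs" and spanV: "VL k r lam Fs \<subseteq> V.span (set bs)"
  shows "\<exists>lam' gam' Fs'. is_linrep S k f (length bs) lam' gam' Fs'"
proof -
  let ?t = "length bs"
  have lamC: "lam \<in> carrier_mat 1 r" and gamC: "gam \<in> carrier_mat r 1"
    and lamS: "mat_over S lam" and gamS: "mat_over S gam"
    and FsC: "\<And>d. d < k \<Longrightarrow> Fs d \<in> carrier_mat r r" and FsS: "\<And>d. d < k \<Longrightarrow> mat_over S (Fs d)"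
    and fn: "\<And>n. f n = (lam * mat_of_n k r Fs n * gam) $$ (0,0)"
    using rep unfolding is_linrep_def by auto
  have pwC: "pw r Fs w \<in> carrier_mat r r" if "set w \<subseteq> {..<k}" for w
    using that FsC by (intro pw_carrier) auto
  have pwS: "mat_over S (pw r Fs w)" if "set w \<subseteq> {..<k}" for w
    using that FsC FsS by (intro pw_over[OF S]) auto
  have VLS: "Sv S v" if vin: "v \<in> VL k r lam Fs" for v
  proof -
    obtain w where w: "set w \<subseteq> {..<k}" "v = rowv (lam * pw r Fs w)" using vin unfolding VL_def by blast
    have "mat_over S (lam * pw r Fs w)" using lamC lamS pwS[OF w(1)] pwC[OF w(1)]
      by (intro mat_over_mult[OF S]) auto
    moreover have "dim_row (lam * pw r Fs w) > 0" using lamC by simp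
    ultimately show ?thesis unfolding w(2) by (rule Sv_rowv[OF S])
  qed
  have bsS: "\<forall>b\<in>set bs. Sv S b" using bsV VLS by blast
  have coeffs: "\<exists>c. (\<forall>s. c s \<in> S) \<and> v = (\<Sum>s<?t. sc (c s) (bs!s))" if vin: "v \<in> VL k r lam Fs" for v
  proof -
    have "v \<in> V.span (set bs)" using spanV vin by blast
    then obtain c where "v = (\<Sum>s<?t. sc (c s) (bs!s))" using span_lincomb by blast
    thus ?thesis using SOLVE[OF S bsS VLS[OF vin]] by blast
  qed
  have lamV: "rowv lam \<in> VL k r lam Fs"
    unfolding VL_def using lamC by (intro CollectI exI[of _ "[]"]) simp
  have stepV: "vecmat r (bs!s) (Fs d) \<in> VL k r lam Fs" if "s < ?t" "d < k" for s d
  proof -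
    have "bs!s \<in> VL k r lam Fs" using that bsV by auto
    then obtain w where w: "set w \<subseteq> {..<k}" "bs!s = rowv (lam * pw r Fs w)" by (auto simp: VL_def)
    have w': "set (w @ [d]) \<subseteq> {..<k}" using w that by auto
    have "pw r Fs (w @ [d]) = pw r Fs w * pw r Fs [d]"
      using w that FsC by (intro pw_append) auto
    also have "pw r Fs [d] = Fs d" using FsC[OF that(2)] by simp
    finally have e: "pw r Fs (w @ [d]) = pw r Fs w * Fs d" .
    have "vecmat r (bs!s) (Fs d) = rowv (lam * pw r Fs w * Fs d)"
      unfolding w(2) using lamC pwC[OF w(1)] FsC[OF that(2)]
      by (subst rowv_mult[of _ r]) auto
    also have "\<dots> = rowv (lam * pw r Fs (w @ [d]))"
      unfolding e using lamC pwC[OF w(1)] FsC[OF that(2)] by (simp add: assoc_mult_mat)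
    finally show ?thesis using w' unfolding VL_def by blast
  qed
  define cl where "cl = (SOME c. (\<forall>s. c s \<in> S) \<and> rowv lam = (\<Sum>s<?t. sc (c s) (bs!s)))"
  have cl: "(\<forall>s. cl s \<in> S) \<and> rowv lam = (\<Sum>s<?t. sc (cl s) (bs!s))"
    using someI_ex[OF coeffs[OF lamV]] unfolding cl_def .
  define C where "C d s = (SOME c. (\<forall>q. c q \<in> S) \<and> vecmat r (bs!s) (Fs d) = (\<Sum>q<?t. sc (c q) (bs!q)))" for d s
  have C: "(\<forall>q. C d s q \<in> S) \<and> vecmat r (bs!s) (Fs d) = (\<Sum>q<?t. sc (C d s q) (bs!q))"
    if "s < ?t" "d < k" for s d
    using someI_ex[OF coeffs[OF stepV[OF that]]] unfolding C_def .
  define B where "B = mat ?t r (\<lambda>(s,j). (bs!s) j)"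
  define lam' where "lam' = mat 1 ?t (\<lambda>(_,s). cl s)"
  define Fs' where "Fs' d = mat ?t ?t (\<lambda>(s,q). C d s q)" for d
  define gam' where "gam' = B * gam"
  have BC: "B \<in> carrier_mat ?t r" and lam'C: "lam' \<in> carrier_mat 1 ?t"
    and Fs'C: "\<And>d. Fs' d \<in> carrier_mat ?t ?t" and gam'C: "gam' \<in> carrier_mat ?t 1"
    using gamC by (auto simp: B_def lam'_def Fs'_def gam'_def)
  have BS: "mat_over S B" using bsS by (auto simp: mat_over_def B_def Sv_def)
  have lamB: "lam' * B = lam"
  proof (rule eq_matI)
    fix i j assume ij: "i < dim_row lam" "j < dim_col lam"
    hence i0: "i = 0" and jr: "j < r" using lamC by auto
    have "(lam' * B) $$ (i,j) = (\<Sum>s<?t. cl s * (bs!s) j)"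
      using i0 jr by (auto simp: lam'_def B_def index_mult_mat scalar_prod_def lessThan_atLeast0 intro!: sum.cong)
    also have "\<dots> = rowv lam j" using cl by (simp add: sum_fun_apply sc_apply)
    also have "\<dots> = lam $$ (i,j)" using i0 jr lamC by (simp add: rowv_def)
    finally show "(lam' * B) $$ (i,j) = lam $$ (i,j)" .
  qed (use lamC in \<open>auto simp: lam'_def B_def\<close>)
  have FB: "Fs' d * B = B * Fs d" if d: "d < k" for d
  proof (rule eq_matI)
    fix s j assume sj: "s < dim_row (B * Fs d)" "j < dim_col (B * Fs d)"
    hence s: "s < ?t" and j: "j < r" using FsC[OF d] by (auto simp: B_def)
    have "(Fs' d * B) $$ (s,j) = (\<Sum>q<?t. C d s q * (bs!q) j)"
      using s j by (auto simp: Fs'_def B_def index_mult_mat scalar_prod_def lessThan_atLeast0 intro!: sum.cong)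
    also have "\<dots> = vecmat r (bs!s) (Fs d) j" using C[OF s d] by (simp add: sum_fun_apply sc_apply)
    also have "\<dots> = (\<Sum>p<r. (bs!s) p * Fs d $$ (p,j))" using j by (simp add: vecmat_def)
    also have "\<dots> = (B * Fs d) $$ (s,j)"
      using s j FsC[OF d] by (auto simp: B_def index_mult_mat scalar_prod_def lessThan_atLeast0 intro!: sum.cong)
    finally show "(Fs' d * B) $$ (s,j) = (B * Fs d) $$ (s,j)" .
  qed (use FsC[OF d] in \<open>auto simp: Fs'_def B_def\<close>)
  have PB: "pw ?t Fs' u * B = B * pw r Fs u" if "set u \<subseteq> {..<k}" for u
    using that
  proof (induction u)
    case Nil thus ?case using BC by simp
  next
    case (Cons d u)
    have d: "d < k" and u: "set u \<subseteq> {..<k}" using Cons.prems by auto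
    have pu': "pw ?t Fs' u \<in> carrier_mat ?t ?t" using Fs'C by (intro pw_carrier) auto
    have "pw ?t Fs' (d # u) * B = Fs' d * (pw ?t Fs' u * B)"
      using assoc_mult_mat[OF Fs'C pu' BC] by simp
    also have "\<dots> = Fs' d * (B * pw r Fs u)" using Cons.IH[OF u] by simp
    also have "\<dots> = (Fs' d * B) * pw r Fs u"
      using assoc_mult_mat[OF Fs'C BC pwC[OF u]] by simp
    also have "\<dots> = B * (Fs d * pw r Fs u)"
      using FB[OF d] assoc_mult_mat[OF BC FsC[OF d] pwC[OF u]] by simp
    finally show ?case by simp
  qed
  have m1: "mat_over S lam'" using cl by (auto simp: mat_over_def lam'_def)
  have m2: "mat_over S gam'" unfolding gam'_def using BS gamS BC gamC
    by (intro mat_over_mult[OF S]) auto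
  have m3: "\<forall>d<k. Fs' d \<in> carrier_mat ?t ?t \<and> mat_over S (Fs' d)"
    using Fs'C C by (auto simp: mat_over_def Fs'_def)
  have m4: "\<forall>n. f n = (lam' * mat_of_n k ?t Fs' n * gam') $$ (0,0)"
  proof
    fix n
    let ?u = "base_digits k n"
    have u: "set ?u \<subseteq> {..<k}" using bd_valid[OF k, of n] by (auto simp: valid_def)
    have pu': "pw ?t Fs' ?u \<in> carrier_mat ?t ?t" using Fs'C by (intro pw_carrier) auto
    have "(lam' * mat_of_n k ?t Fs' n * gam') = lam' * pw ?t Fs' ?u * (B * gam)"
      by (simp add: mat_of_n_pw gam'_def)
    also have "\<dots> = lam' * (pw ?t Fs' ?u * B) * gam"
      using assoc_mult_mat[OF mult_carrier_mat[OF lam'C pu'] BC gamC] assoc_mult_mat[OF lam'C pu' BC] by simp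
    also have "\<dots> = (lam' * B) * pw r Fs ?u * gam"
      unfolding PB[OF u] using assoc_mult_mat[OF lam'C BC pwC[OF u]] by simp
    also have "\<dots> = lam * mat_of_n k r Fs n * gam" by (simp add: lamB mat_of_n_pw)
    finally show "f n = (lam' * mat_of_n k ?t Fs' n * gam') $$ (0,0)" using fn by simp
  qed
  have "is_linrep S k f ?t lam' gam' Fs'"
    unfolding is_linrep_def using lam'C gam'C m1 m2 m3 m4 by blast
  thus ?thesis by blast
qed

lemma mult_entry: "A \<in> carrier_mat m n \<Longrightarrow> B \<in> carrier_mat n p \<Longrightarrow> i < m \<Longrightarrow> j < p \<Longrightarrow>
  (A * B) $$ (i,j) = (\<Sum>q<n. A $$ (i,q) * B $$ (q,j))"
  by (auto simp: index_mult_mat scalar_prod_def lessThan_atLeast0 intro!: sum.cong)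

definition VZ :: "nat \<Rightarrow> nat \<Rightarrow> real mat \<Rightarrow> (nat \<Rightarrow> real mat) \<Rightarrow> (nat \<Rightarrow> real) set" where
  "VZ k r gam Fs = {colv (pw r Fs (v @ [d]) * gam) | v d. set v \<subseteq> {..<k} \<and> 0 < d \<and> d < k}"

lemma CR:
  assumes S: "subfield_of_real_algebraic S" and rep: "is_linrep S k f r lam gam Fs" and k: "k \<ge> 2"
    and bsV: "set bs \<subseteq> VZ k r gam Fs" and spanV: "VZ k r gam Fs \<subseteq> V.span (set bs)"
  shows "(\<exists>lam' gam' Fs'. is_linrep S k f (length bs + 1) lam' gam' Fs') \<and>
         (colv gam \<in> V.span (set bs) \<longrightarrow> (\<exists>lam' gam' Fs'. is_linrep S k f (length bs) lam' gam' Fs'))"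
proof -
  let ?t = "length bs"
  have lamC: "lam \<in> carrier_mat 1 r" and gamC: "gam \<in> carrier_mat r 1"
    and lamS: "mat_over S lam" and gamS: "mat_over S gam"
    and FsC: "\<And>d. d < k \<Longrightarrow> Fs d \<in> carrier_mat r r" and FsS: "\<And>d. d < k \<Longrightarrow> mat_over S (Fs d)"
    and fn: "\<And>n. f n = (lam * mat_of_n k r Fs n * gam) $$ (0,0)"
    using rep unfolding is_linrep_def by auto
  have pwC: "pw r Fs w \<in> carrier_mat r r" if "set w \<subseteq> {..<k}" for w
    using that FsC by (intro pw_carrier) auto
  have pwS: "mat_over S (pw r Fs w)" if "set w \<subseteq> {..<k}" for w
    using that FsC FsS by (intro pw_over[OF S]) auto
  have colS: "Sv S (colv (P * gam))" if "P \<in> carrier_mat r r" "mat_over S P" for P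
  proof -
    have "mat_over S (P * gam)" using that gamC gamS by (intro mat_over_mult[OF S]) auto
    moreover have "dim_col (P * gam) > 0" using gamC by simp
    ultimately show ?thesis by (rule Sv_colv[OF S])
  qed
  have VZS: "Sv S v" if vin: "v \<in> VZ k r gam Fs" for v
  proof -
    obtain w d where w: "set w \<subseteq> {..<k}" "0 < d" "d < k" "v = colv (pw r Fs (w @ [d]) * gam)"
      using vin unfolding VZ_def by blast
    have w': "set (w @ [d]) \<subseteq> {..<k}" using w by auto
    show ?thesis unfolding w(4) using pwC[OF w'] pwS[OF w'] by (rule colS)
  qed
  have bsS: "\<forall>b\<in>set bs. Sv S b" using bsV VZS by blast
  have coeffs: "\<exists>c. (\<forall>s. c s \<in> S) \<and> v = (\<Sum>s<?t. sc (c s) (bs!s))"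
    if vin: "v \<in> V.span (set bs)" and vS: "Sv S v" for v
  proof -
    obtain c where "v = (\<Sum>s<?t. sc (c s) (bs!s))" using span_lincomb vin by blast
    thus ?thesis using SOLVE[OF S bsS vS] by blast
  qed
  have stepV: "matvec r (Fs d) (bs!s) \<in> VZ k r gam Fs" if "s < ?t" "d < k" for s d
  proof -
    have "bs!s \<in> VZ k r gam Fs" using that bsV by auto
    then obtain w e where w: "set w \<subseteq> {..<k}" "0 < e" "e < k" "bs!s = colv (pw r Fs (w @ [e]) * gam)"
      unfolding VZ_def by blast
    have w': "set (w @ [e]) \<subseteq> {..<k}" using w by auto
    have "matvec r (Fs d) (bs!s) = colv (Fs d * (pw r Fs (w @ [e]) * gam))"
      unfolding w(4) using gamC pwC[OF w'] FsC[OF that(2)]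
      by (subst colv_mult[of _ r]) auto
    also have "\<dots> = colv (pw r Fs ((d # w) @ [e]) * gam)"
      using assoc_mult_mat[OF FsC[OF that(2)] pwC[OF w'] gamC] by simp
    finally have eq: "matvec r (Fs d) (bs!s) = colv (pw r Fs ((d # w) @ [e]) * gam)" .
    have "set (d # w) \<subseteq> {..<k}" using w that by auto
    thus ?thesis using eq w(2,3) unfolding VZ_def by blast
  qed
  have yV: "colv (Fs d * gam) \<in> VZ k r gam Fs" if "0 < d" "d < k" for d
  proof -
    have "colv (Fs d * gam) = colv (pw r Fs ([] @ [d]) * gam)" using FsC[OF that(2)] by simp
    moreover have "set ([]::nat list) \<subseteq> {..<k}" by simp
    ultimately show ?thesis using that unfolding VZ_def by blast
  qed
  define Mc where "Mc d s = (SOME c. (\<forall>q. c q \<in> S) \<and> matvec r (Fs d) (bs!s) = (\<Sum>q<?t. sc (c q) (bs!q)))" for d s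
  have Mc: "(\<forall>q. Mc d s q \<in> S) \<and> matvec r (Fs d) (bs!s) = (\<Sum>q<?t. sc (Mc d s q) (bs!q))"
    if "s < ?t" "d < k" for s d
    using someI_ex[OF coeffs[OF subsetD[OF spanV stepV[OF that]] VZS[OF stepV[OF that]]]]
    unfolding Mc_def .
  define Y where "Y d = (SOME c. (\<forall>q. c q \<in> S) \<and> colv (Fs d * gam) = (\<Sum>q<?t. sc (c q) (bs!q)))" for d
  have Y: "(\<forall>q. Y d q \<in> S) \<and> colv (Fs d * gam) = (\<Sum>q<?t. sc (Y d q) (bs!q))"
    if "0 < d" "d < k" for d
    using someI_ex[OF coeffs[OF subsetD[OF spanV yV[OF that]] VZS[OF yV[OF that]]]]
    unfolding Y_def .
  define C where "C = mat r ?t (\<lambda>(i,s). (bs!s) i)"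
  define M where "M d = mat ?t ?t (\<lambda>(q,s). Mc d s q)" for d
  define yv where "yv d = mat ?t 1 (\<lambda>(q,_). Y d q)" for d
  have CC: "C \<in> carrier_mat r ?t" and MC: "\<And>d. M d \<in> carrier_mat ?t ?t" and yvC: "\<And>d. yv d \<in> carrier_mat ?t 1"
    by (auto simp: C_def M_def yv_def)
  have CS: "mat_over S C" using bsS by (auto simp: mat_over_def C_def Sv_def)
  have FC: "Fs d * C = C * M d" if d: "d < k" for d
  proof (rule eq_matI)
    fix i s assume isx: "i < dim_row (C * M d)" "s < dim_col (C * M d)"
    hence i: "i < r" and s: "s < ?t" using MC[of d] CC by auto
    have "(Fs d * C) $$ (i,s) = (\<Sum>p<r. Fs d $$ (i,p) * (bs!s) p)"
      using i s by (subst mult_entry[OF FsC[OF d] CC]) (simp_all add: C_def)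
    also have "\<dots> = matvec r (Fs d) (bs!s) i" using i by (simp add: matvec_def)
    also have "\<dots> = (\<Sum>q<?t. Mc d s q * (bs!q) i)" using Mc[OF s d] by (simp add: sum_fun_apply sc_apply)
    also have "\<dots> = (C * M d) $$ (i,s)"
      using i s by (subst mult_entry[OF CC MC]) (auto simp: C_def M_def intro!: sum.cong)
    finally show "(Fs d * C) $$ (i,s) = (C * M d) $$ (i,s)" .
  qed (use FsC[OF d] CC MC[of d] in auto)
  have Fy: "Fs d * gam = C * yv d" if d: "0 < d" "d < k" for d
  proof (rule eq_matI)
    fix i j assume ij: "i < dim_row (C * yv d)" "j < dim_col (C * yv d)"
    hence i: "i < r" and j: "j = 0" using yvC[of d] CC by auto
    have "(Fs d * gam) $$ (i,j) = colv (Fs d * gam) i" using i j FsC[OF d(2)] gamC by (simp add: colv_def)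
    also have "\<dots> = (\<Sum>q<?t. Y d q * (bs!q) i)" using Y[OF d] by (simp add: sum_fun_apply sc_apply)
    also have "\<dots> = (C * yv d) $$ (i,j)"
      using i j by (subst mult_entry[OF CC yvC]) (auto simp: C_def yv_def intro!: sum.cong)
    finally show "(Fs d * gam) $$ (i,j) = (C * yv d) $$ (i,j)" .
  qed (use FsC[OF d(2)] gamC CC yvC[of d] in auto)
  have PC: "pw r Fs u * C = C * pw ?t M u" if "set u \<subseteq> {..<k}" for u
    using that
  proof (induction u)
    case Nil thus ?case using CC by simp
  next
    case (Cons d u)
    have d: "d < k" and u: "set u \<subseteq> {..<k}" using Cons.prems by auto
    have pu': "pw ?t M u \<in> carrier_mat ?t ?t" using MC by (intro pw_carrier) auto
    have "pw r Fs (d # u) * C = Fs d * (pw r Fs u * C)"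
      using assoc_mult_mat[OF FsC[OF d] pwC[OF u] CC] by simp
    also have "\<dots> = Fs d * (C * pw ?t M u)" using Cons.IH[OF u] by simp
    also have "\<dots> = (Fs d * C) * pw ?t M u"
      using assoc_mult_mat[OF FsC[OF d] CC pu'] by simp
    also have "\<dots> = C * (M d * pw ?t M u)"
      using FC[OF d] assoc_mult_mat[OF CC MC pu'] by simp
    finally show ?case by simp
  qed
  have MS: "mat_over S (M d)" if "d < k" for d
    using Mc that by (auto simp: mat_over_def M_def)
  have lamCS: "mat_over S (lam * C)" using lamS CS lamC CC by (intro mat_over_mult[OF S]) auto
  have part2: "colv gam \<in> V.span (set bs) \<longrightarrow> (\<exists>lam' gam' Fs'. is_linrep S k f ?t lam' gam' Fs')"
  proof
    assume gin: "colv gam \<in> V.span (set bs)"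
    have gS: "Sv S (colv gam)" using colS[OF one_carrier_mat mat_over_one[OF S]] gamC by simp
    define Y0 where "Y0 = (SOME c. (\<forall>q. c q \<in> S) \<and> colv gam = (\<Sum>q<?t. sc (c q) (bs!q)))"
    have Y0: "(\<forall>q. Y0 q \<in> S) \<and> colv gam = (\<Sum>q<?t. sc (Y0 q) (bs!q))"
      using someI_ex[OF coeffs[OF gin gS]] unfolding Y0_def .
    define y0 where "y0 = mat ?t 1 (\<lambda>(q,_). Y0 q)"
    have y0C: "y0 \<in> carrier_mat ?t 1" by (simp add: y0_def)
    have gy: "gam = C * y0"
    proof (rule eq_matI)
      fix i j assume ij: "i < dim_row (C * y0)" "j < dim_col (C * y0)"
      hence i: "i < r" and j: "j = 0" using y0C CC by auto
      have "gam $$ (i,j) = colv gam i" using i j gamC by (simp add: colv_def)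
      also have "\<dots> = (\<Sum>q<?t. Y0 q * (bs!q) i)" using Y0 by (simp add: sum_fun_apply sc_apply)
      also have "\<dots> = (C * y0) $$ (i,j)"
        using i j by (subst mult_entry[OF CC y0C]) (auto simp: C_def y0_def intro!: sum.cong)
      finally show "gam $$ (i,j) = (C * y0) $$ (i,j)" .
    qed (use gamC CC y0C in auto)
    have m1: "lam * C \<in> carrier_mat 1 ?t" using lamC CC by simp
    have m2: "mat_over S y0" using Y0 by (auto simp: mat_over_def y0_def)
    have m3: "\<forall>d<k. M d \<in> carrier_mat ?t ?t \<and> mat_over S (M d)" using MC MS by blast
    have m4: "\<forall>n. f n = (lam * C * mat_of_n k ?t M n * y0) $$ (0,0)"
    proof
      fix n
      let ?u = "base_digits k n"
      have u: "set ?u \<subseteq> {..<k}" using bd_valid[OF k, of n] by (auto simp: valid_def)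
      have pu': "pw ?t M ?u \<in> carrier_mat ?t ?t" using MC by (intro pw_carrier) auto
      have "lam * mat_of_n k r Fs n * gam = lam * pw r Fs ?u * (C * y0)"
        by (simp add: mat_of_n_pw gy)
      also have "\<dots> = lam * (pw r Fs ?u * C) * y0"
        using assoc_mult_mat[OF mult_carrier_mat[OF lamC pwC[OF u]] CC y0C] assoc_mult_mat[OF lamC pwC[OF u] CC] by simp
      also have "\<dots> = lam * C * pw ?t M ?u * y0"
        unfolding PC[OF u] using assoc_mult_mat[OF lamC CC pu'] by simp
      finally show "f n = (lam * C * mat_of_n k ?t M n * y0) $$ (0,0)" using fn by (simp add: mat_of_n_pw)
    qed
    have "is_linrep S k f ?t (lam * C) y0 M"
      unfolding is_linrep_def using m1 y0C lamCS m2 m3 m4 by blast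
    thus "\<exists>lam' gam' Fs'. is_linrep S k f ?t lam' gam' Fs'" by blast
  qed
  have part1: "\<exists>lam' gam' Fs'. is_linrep S k f (?t + 1) lam' gam' Fs'"
  proof -
    let ?T = "?t + 1"
    define Fs' where "Fs' d = mat ?T ?T (\<lambda>(i,j). if i < ?t \<and> j < ?t then M d $$ (i,j)
        else if i < ?t \<and> j = ?t \<and> 0 < d then Y d i else 0)" for d
    define lam' where "lam' = mat 1 ?T (\<lambda>(_,j). if j < ?t then (lam * C) $$ (0,j) else f 0)"
    define gam' where "gam' = mat ?T 1 (\<lambda>(i,_). if i = ?t then 1 else (0::real))"
    define ext where "ext z = mat ?T 1 (\<lambda>(i,_). if i < ?t then z $$ (i,0) else 0)" for z :: "real mat"
    have Fs'C: "\<And>d. Fs' d \<in> carrier_mat ?T ?T" and lam'C: "lam' \<in> carrier_mat 1 ?T"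
      and gam'C: "gam' \<in> carrier_mat ?T 1" and extC: "\<And>z. ext z \<in> carrier_mat ?T 1"
      by (auto simp: Fs'_def lam'_def gam'_def ext_def)
    have splitT: "(\<Sum>j<?T. g j) = (\<Sum>j<?t. g j) + g ?t" for g :: "nat \<Rightarrow> real" by simp
    have A: "Fs' d * ext z = ext (M d * z)" if z: "z \<in> carrier_mat ?t 1" for d z
    proof (rule eq_matI)
      fix i j assume ij: "i < dim_row (ext (M d * z))" "j < dim_col (ext (M d * z))"
      hence i: "i < ?T" and j: "j = 0" using extC[of "M d * z"] by auto
      have "(Fs' d * ext z) $$ (i,j) = (\<Sum>q<?T. Fs' d $$ (i,q) * ext z $$ (q,0))"
        using i j by (subst mult_entry[OF Fs'C extC]) simp_all
      also have "\<dots> = (\<Sum>q<?t. Fs' d $$ (i,q) * ext z $$ (q,0))"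
        unfolding splitT using i by (simp add: ext_def)
      also have "\<dots> = (if i < ?t then (\<Sum>q<?t. M d $$ (i,q) * z $$ (q,0)) else 0)"
        using i by (auto simp: Fs'_def ext_def intro!: sum.cong)
      also have "\<dots> = ext (M d * z) $$ (i,j)"
        using i j z MC[of d] by (auto simp: ext_def mult_entry[OF MC z] simp del: index_mult_mat)
      finally show "(Fs' d * ext z) $$ (i,j) = ext (M d * z) $$ (i,j)" .
    qed (auto simp: ext_def Fs'_def)
    have B: "pw ?T Fs' u * ext z = ext (pw ?t M u * z)" if "set u \<subseteq> {..<k}" "z \<in> carrier_mat ?t 1" for u z
      using that
    proof (induction u)
      case Nil thus ?case using extC[of z] by simp
    next
      case (Cons d u)
      have u: "set u \<subseteq> {..<k}" using Cons.prems by auto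
      have pu': "pw ?T Fs' u \<in> carrier_mat ?T ?T" using Fs'C by (intro pw_carrier) auto
      have pu: "pw ?t M u \<in> carrier_mat ?t ?t" using MC by (intro pw_carrier) auto
      have "pw ?T Fs' (d # u) * ext z = Fs' d * (pw ?T Fs' u * ext z)"
        using assoc_mult_mat[OF Fs'C pu' extC] by simp
      also have "\<dots> = Fs' d * ext (pw ?t M u * z)" using Cons.IH[OF u Cons.prems(2)] by simp
      also have "\<dots> = ext (M d * (pw ?t M u * z))"
        using A mult_carrier_mat[OF pu Cons.prems(2)] by blast
      also have "M d * (pw ?t M u * z) = pw ?t M (d # u) * z"
        using assoc_mult_mat[OF MC pu Cons.prems(2)] by simp
      finally show ?case .
    qed
    have Cg: "Fs' d * gam' = ext (yv d)" if d: "0 < d" for d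
    proof (rule eq_matI)
      fix i j assume ij: "i < dim_row (ext (yv d))" "j < dim_col (ext (yv d))"
      hence i: "i < ?T" and j: "j = 0" using extC[of "yv d"] by auto
      have "(Fs' d * gam') $$ (i,j) = (\<Sum>q<?T. Fs' d $$ (i,q) * gam' $$ (q,0))"
        using i j by (subst mult_entry[OF Fs'C gam'C]) simp_all
      also have "\<dots> = Fs' d $$ (i,?t)"
        unfolding splitT using i by (simp add: gam'_def)
      also have "\<dots> = ext (yv d) $$ (i,j)"
        using i j d by (auto simp: Fs'_def ext_def yv_def)
      finally show "(Fs' d * gam') $$ (i,j) = ext (yv d) $$ (i,j)" .
    qed (auto simp: ext_def Fs'_def gam'_def)
    have D: "(lam' * ext z) $$ (0,0) = (lam * C * z) $$ (0,0)" if z: "z \<in> carrier_mat ?t 1" for z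
    proof -
      have "(lam' * ext z) $$ (0,0) = (\<Sum>q<?T. lam' $$ (0,q) * ext z $$ (q,0))"
        by (subst mult_entry[OF lam'C extC]) simp_all
      also have "\<dots> = (\<Sum>q<?t. (lam * C) $$ (0,q) * z $$ (q,0))"
        unfolding splitT by (auto simp: lam'_def ext_def intro!: sum.cong)
      also have "\<dots> = (lam * C * z) $$ (0,0)"
        using mult_entry[OF mult_carrier_mat[OF lamC CC] z] by simp
      finally show ?thesis .
    qed
    have E: "(lam' * gam') $$ (0,0) = f 0"
    proof -
      have "(lam' * gam') $$ (0,0) = (\<Sum>q<?T. lam' $$ (0,q) * gam' $$ (q,0))"
        by (subst mult_entry[OF lam'C gam'C]) simp_all
      also have "\<dots> = f 0" unfolding splitT by (simp add: lam'_def gam'_def)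
      finally show ?thesis .
    qed
    have f0S: "f 0 \<in> S"
    proof -
      have "mat_over S (lam * 1\<^sub>m r * gam)"
        using lamS lamC gamS gamC mat_over_one[OF S]
        by (intro mat_over_mult[OF S]) auto
      hence "(lam * 1\<^sub>m r * gam) $$ (0,0) \<in> S" using lamC gamC by (auto simp: mat_over_def)
      thus ?thesis using fn[of 0] by (simp add: mat_of_n_pw)
    qed
    have m1: "mat_over S lam'" using lamCS f0S lamC CC by (auto simp: mat_over_def lam'_def)
    have m2: "mat_over S gam'" using Sfacts[OF S] by (auto simp: mat_over_def gam'_def)
    have m3: "\<forall>d<k. Fs' d \<in> carrier_mat ?T ?T \<and> mat_over S (Fs' d)"
    proof (intro allI impI conjI)
      fix d assume d: "d < k"
      show "Fs' d \<in> carrier_mat ?T ?T" by (rule Fs'C)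
      show "mat_over S (Fs' d)"
        using MS[OF d] MC[of d] Y d Sfacts[OF S] by (auto simp: mat_over_def Fs'_def)
    qed
    have m4: "\<forall>n. f n = (lam' * mat_of_n k ?T Fs' n * gam') $$ (0,0)"
    proof
      fix n
      show "f n = (lam' * mat_of_n k ?T Fs' n * gam') $$ (0,0)"
      proof (cases "n = 0")
        case True
        thus ?thesis using E lam'C by (simp add: mat_of_n_pw)
      next
        case False
        let ?ds = "base_digits k n"
        have vds: "valid k ?ds" by (rule bd_valid[OF k])
        have ne: "?ds \<noteq> []" using False k by (simp add: bd_pos)
        define u where "u = butlast ?ds"
        define d where "d = last ?ds"
        have dsu: "?ds = u @ [d]" using ne by (simp add: u_def d_def)
        have u: "set u \<subseteq> {..<k}" and d: "d < k" "0 < d"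
          using vds ne unfolding valid_def dsu by auto
        have pu': "pw ?T Fs' u \<in> carrier_mat ?T ?T" using Fs'C by (intro pw_carrier) auto
        have pu: "pw ?t M u \<in> carrier_mat ?t ?t" using MC by (intro pw_carrier) auto
        have "pw ?T Fs' (u @ [d]) = pw ?T Fs' u * pw ?T Fs' [d]"
          using u Fs'C by (intro pw_append) auto
        also have "pw ?T Fs' [d] = Fs' d" using Fs'C[of d] by simp
        finally have e1: "pw ?T Fs' (u @ [d]) = pw ?T Fs' u * Fs' d" .
        have "pw r Fs (u @ [d]) = pw r Fs u * pw r Fs [d]"
          using u d FsC by (intro pw_append) auto
        also have "pw r Fs [d] = Fs d" using FsC[OF d(1)] by simp
        finally have e2: "pw r Fs (u @ [d]) = pw r Fs u * Fs d" .
        have "lam' * mat_of_n k ?T Fs' n * gam' = lam' * (pw ?T Fs' u * Fs' d) * gam'"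
          unfolding mat_of_n_pw dsu e1 by (rule refl)
        also have "\<dots> = lam' * (pw ?T Fs' u * (Fs' d * gam'))"
          using assoc_mult_mat[OF lam'C mult_carrier_mat[OF pu' Fs'C] gam'C]
            assoc_mult_mat[OF pu' Fs'C gam'C] by simp
        also have "\<dots> = lam' * ext (pw ?t M u * yv d)"
          using Cg[OF d(2)] B[OF u yvC] by simp
        finally have L: "(lam' * mat_of_n k ?T Fs' n * gam') $$ (0,0) = (lam * C * (pw ?t M u * yv d)) $$ (0,0)"
          using D[OF mult_carrier_mat[OF pu yvC]] by simp
        have "lam * mat_of_n k r Fs n * gam = lam * (pw r Fs u * Fs d) * gam"
          unfolding mat_of_n_pw dsu e2 by (rule refl)
        also have "\<dots> = lam * pw r Fs u * (Fs d * gam)"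
          using assoc_mult_mat[OF lamC pwC[OF u] FsC[OF d(1)]]
            assoc_mult_mat[OF mult_carrier_mat[OF lamC pwC[OF u]] FsC[OF d(1)] gamC] by simp
        also have "\<dots> = lam * pw r Fs u * (C * yv d)" using Fy[OF d(2) d(1)] by simp
        also have "\<dots> = lam * (pw r Fs u * C) * yv d"
          using assoc_mult_mat[OF mult_carrier_mat[OF lamC pwC[OF u]] CC yvC]
            assoc_mult_mat[OF lamC pwC[OF u] CC] by simp
        also have "\<dots> = lam * C * (pw ?t M u * yv d)"
          unfolding PC[OF u] using assoc_mult_mat[OF lamC CC pu]
            assoc_mult_mat[OF mult_carrier_mat[OF lamC CC] pu yvC] by simp
        finally show ?thesis using fn[of n] L by simp
      qed
    qed
    have "is_linrep S k f ?T lam' gam' Fs'"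
      unfolding is_linrep_def using lam'C gam'C m1 m2 m3 m4 by blast
    thus ?thesis by blast
  qed
  show ?thesis using part1 part2 by blast
qed

lemma suppr_rowv: "dim_col A = r \<Longrightarrow> suppr r (rowv A)"
  by (auto simp: suppr_def rowv_def)
lemma suppr_colv: "dim_row A = r \<Longrightarrow> suppr r (colv A)"
  by (auto simp: suppr_def colv_def)

lemma list_of_set: "finite B \<Longrightarrow> \<exists>bs. set bs = B \<and> length bs = card B"
  using finite_distinct_list distinct_card by metis

theorem proposition3p9:
  fixes k r :: nat and S :: "real set" and f :: "nat \<Rightarrow> real"
    and lam gam :: "real mat" and Fs :: "nat \<Rightarrow> real mat"
    and \<sigma> :: real and l :: nat
  assumes "k \<ge> 2"
    and "subfield_of_real_algebraic S"
    and "is_minimal_linrep S k f r lam gam Fs"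
  shows "f \<in> O(\<lambda>n. real n powr \<sigma> * ln (real n) ^ l) \<longleftrightarrow>
         (\<forall>i<r. \<forall>j<r. (\<lambda>n. mat_of_n k r Fs n $$ (i,j)) \<in> O(\<lambda>n. real n powr \<sigma> * ln (real n) ^ l))"
proof -
  note k = assms(1) and S = assms(2)
  have rep: "is_linrep S k f r lam gam Fs" and minr: "\<And>r' lam' gam' Fs'. is_linrep S k f r' lam' gam' Fs' \<Longrightarrow> r \<le> r'"
    using assms(3) unfolding is_minimal_linrep_def by blast+
  have lamC: "lam \<in> carrier_mat 1 r" and gamC: "gam \<in> carrier_mat r 1"
    and FsC: "\<And>d. d < k \<Longrightarrow> Fs d \<in> carrier_mat r r"
    and fn: "\<And>n. f n = (lam * mat_of_n k r Fs n * gam) $$ (0,0)"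
    using rep unfolding is_linrep_def by auto
  have pwC: "pw r Fs w \<in> carrier_mat r r" if "set w \<subseteq> {..<k}" for w
    using that FsC by (intro pw_carrier) auto
  have bdk: "set (base_digits k n) \<subseteq> {..<k}" for n using bd_valid[OF k, of n] by (auto simp: valid_def)
  have FnC: "mat_of_n k r Fs n \<in> carrier_mat r r" for n
    unfolding mat_of_n_pw by (rule pwC[OF bdk])
  let ?h = "\<lambda>n::nat. real n powr \<sigma> * ln (real n) ^ l"
  let ?Fn = "mat_of_n k r Fs"
  have bilO: "(\<lambda>n. bil r x (?Fn n) y) \<in> O(?h)"
    if "\<forall>i<r. \<forall>j<r. (\<lambda>n. ?Fn n $$ (i,j)) \<in> O(?h)" for x y
  proof -
    have "(\<lambda>n. \<Sum>p<r. \<Sum>q<r. x p * ?Fn n $$ (p,q) * y q) \<in> O(?h)"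
    proof (intro big_sum_in_bigo)
      fix p q assume "p \<in> {..<r}" "q \<in> {..<r}"
      hence "(\<lambda>n. (x p * y q) * ?Fn n $$ (p,q)) \<in> O(?h)" using that by (intro cmult_O) auto
      thus "(\<lambda>n. x p * ?Fn n $$ (p,q) * y q) \<in> O(?h)" by (simp add: mult_ac)
    qed
    thus ?thesis by (simp add: bil_def)
  qed
  have dir1: "f \<in> O(?h)" if "\<forall>i<r. \<forall>j<r. (\<lambda>n. ?Fn n $$ (i,j)) \<in> O(?h)"
  proof -
    have "f = (\<lambda>n. bil r (rowv lam) (?Fn n) (colv gam))"
      using fn trip[OF lamC FnC gamC] by auto
    thus ?thesis using bilO[OF that] by simp
  qed
  define VLs where "VLs = VL k r lam Fs"
  define VRs where "VRs = {colv (pw r Fs vv * gam) | vv. valid k vv}"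
  define VZs where "VZs = VZ k r gam Fs"
  have VZR: "VZs \<subseteq> VRs"
  proof
    fix y assume "y \<in> VZs"
    then obtain v d where vd: "set v \<subseteq> {..<k}" "0 < d" "d < k" "y = colv (pw r Fs (v @ [d]) * gam)"
      unfolding VZs_def VZ_def by blast
    have "valid k (v @ [d])" using vd by (auto simp: valid_def)
    thus "y \<in> VRs" unfolding VRs_def using vd(4) by blast
  qed
  have gR: "colv gam \<in> VRs"
  proof -
    have "valid k []" by (simp add: valid_def)
    moreover have "colv gam = colv (pw r Fs [] * gam)" using gamC by simp
    ultimately show ?thesis unfolding VRs_def by blast
  qed
  have suppL: "\<forall>x\<in>VLs. suppr r x"
  proof
    fix x assume "x \<in> VLs"
    then obtain w where w: "set w \<subseteq> {..<k}" "x = rowv (lam * pw r Fs w)" unfolding VLs_def VL_def by blast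
    have "lam * pw r Fs w \<in> carrier_mat 1 r" using lamC pwC[OF w(1)] by simp
    thus "suppr r x" unfolding w(2) by (intro suppr_rowv) auto
  qed
  have suppR: "\<forall>x\<in>VRs. suppr r x"
  proof
    fix x assume "x \<in> VRs"
    then obtain vv where w: "valid k vv" "x = colv (pw r Fs vv * gam)" unfolding VRs_def by blast
    have "set vv \<subseteq> {..<k}" using w(1) by (auto simp: valid_def)
    hence "pw r Fs vv * gam \<in> carrier_mat r 1" using gamC pwC by (intro mult_carrier_mat) auto
    thus "suppr r x" unfolding w(2) by (intro suppr_colv) auto
  qed
  have claimL: "ev i \<in> V.span VLs" if i: "i < r" for i
  proof (rule ccontr)
    assume nin: "ev i \<notin> V.span VLs"
    obtain B where B: "B \<subseteq> VLs" "V.independent B" "VLs \<subseteq> V.span B"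
      using V.maximal_independent_subset by blast
    have suppB: "\<forall>x\<in>B. suppr r x" using B suppL by blast
    have fin: "finite B" and cB: "card B \<le> r" using G1[OF B(2) suppB] by auto
    have "card B \<noteq> r"
    proof
      assume "card B = r"
      hence "ev i \<in> V.span B" using G2[OF B(2) suppB _ i] by simp
      thus False using nin V.span_mono[OF B(1)] by blast
    qed
    hence lt: "card B < r" using cB by simp
    obtain bs where bs: "set bs = B" "length bs = card B" using list_of_set[OF fin] by blast
    have "\<exists>lam' gam' Fs'. is_linrep S k f (length bs) lam' gam' Fs'"
      using CL[OF S rep k, of bs] B(1) B(3) bs(1) unfolding VLs_def by blast
    then obtain lam' gam' Fs' where "is_linrep S k f (length bs) lam' gam' Fs'" by blast
    from minr[OF this] bs lt show False by simp
  qed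
  have claimR: "ev j \<in> V.span VRs" if j: "j < r" for j
  proof (rule ccontr)
    assume nin: "ev j \<notin> V.span VRs"
    obtain B where B: "B \<subseteq> VZs" "V.independent B" "VZs \<subseteq> V.span B"
      using V.maximal_independent_subset by blast
    have BR: "B \<subseteq> VRs" using B VZR by blast
    have suppB: "\<forall>x\<in>B. suppr r x" using BR suppR by blast
    have fin: "finite B" and cB: "card B \<le> r" using G1[OF B(2) suppB] by auto
    have "card B \<noteq> r"
    proof
      assume "card B = r"
      hence "ev j \<in> V.span B" using G2[OF B(2) suppB _ j] by simp
      thus False using nin V.span_mono[OF BR] by blast
    qed
    hence lt: "card B < r" using cB by simp
    obtain bs where bs: "set bs = B" "length bs = card B" using list_of_set[OF fin] by blast
    have cr: "(\<exists>lam' gam' Fs'. is_linrep S k f (length bs + 1) lam' gam' Fs') \<and>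
         (colv gam \<in> V.span (set bs) \<longrightarrow> (\<exists>lam' gam' Fs'. is_linrep S k f (length bs) lam' gam' Fs'))"
      using CR[OF S rep k, of bs] B(1) B(3) bs(1) unfolding VZs_def by blast
    show False
    proof (cases "colv gam \<in> V.span B")
      case True
      then obtain lam' gam' Fs' where "is_linrep S k f (length bs) lam' gam' Fs'" using cr bs by blast
      from minr[OF this] bs lt show False by simp
    next
      case False
      show False
      proof (cases "card B + 1 < r")
        case True
        obtain lam' gam' Fs' where "is_linrep S k f (length bs + 1) lam' gam' Fs'" using cr by blast
        from minr[OF this] bs True show False by simp
      next
        case False2: False
        have ind: "V.independent (insert (colv gam) B)" using V.independent_insertI[OF False B(2)] .
        have gnB: "colv gam \<notin> B" using False V.span_base by blast
        have supp2: "\<forall>x\<in>insert (colv gam) B. suppr r x" using suppB suppR gR by blast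
        have "card (insert (colv gam) B) = r" using False2 lt fin gnB by simp
        hence "ev j \<in> V.span (insert (colv gam) B)" using G2[OF ind supp2 _ j] by simp
        moreover have "insert (colv gam) B \<subseteq> VRs" using gR BR by blast
        ultimately show False using nin V.span_mono by blast
      qed
    qed
  qed
  have step1: "(\<lambda>n. bil r x (?Fn n) y) \<in> O(?h)" if f: "f \<in> O(?h)" and x: "x \<in> VLs" and y: "y \<in> VRs" for x y
  proof -
    obtain w where w: "set w \<subseteq> {..<k}" "x = rowv (lam * pw r Fs w)" using x unfolding VLs_def VL_def by blast
    obtain vv where vv: "valid k vv" "y = colv (pw r Fs vv * gam)" using y unfolding VRs_def by blast
    have vvk: "set vv \<subseteq> {..<k}" using vv(1) by (auto simp: valid_def)
    define m where "m n = val k (w @ base_digits k n @ vv)" for n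
    have wk: "\<forall>d\<in>set w. d < k" using w(1) by auto
    have mb: "n \<le> k * m n \<and> m n \<le> k ^ (length w + length vv + 1) * n" if "n \<ge> 1" for n
      unfolding m_def using bd_bounds[OF k that wk vv(1)] .
    have k1: "k \<ge> 1" using k by simp
    have K1: "k ^ (length w + length vv + 1) \<ge> 1" using k by simp
    have fm: "(\<lambda>n. f (m n)) \<in> O(?h)"
      by (rule growth_comp[where k=k and K="k ^ (length w + length vv + 1)" and m=m, OF f k1 K1 mb])
    have eq: "bil r x (?Fn n) y = f (m n)" if n: "n \<ge> 1" for n
    proof -
      let ?ds = "base_digits k n"
      have ne: "?ds \<noteq> []" using n k by (simp add: bd_pos)
      have vall: "valid k (w @ ?ds @ vv)" using valid_app[OF wk bd_valid[OF k] ne vv(1)] .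
      have bm: "base_digits k (m n) = w @ ?ds @ vv" unfolding m_def using bd_val[OF k vall] .
      have pA: "pw r Fs (w @ ?ds @ vv) = pw r Fs w * (pw r Fs ?ds * pw r Fs vv)"
      proof -
        have cw: "\<forall>d\<in>set w. Fs d \<in> carrier_mat r r" using w(1) FsC by auto
        have cv: "\<forall>d\<in>set vv. Fs d \<in> carrier_mat r r" using vvk FsC by auto
        have cd: "\<forall>d\<in>set ?ds. Fs d \<in> carrier_mat r r" using bdk[of n] FsC by auto
        have cdv: "\<forall>d\<in>set (?ds @ vv). Fs d \<in> carrier_mat r r" using cd cv by auto
        show ?thesis using pw_append[OF cw cdv] pw_append[OF cd cv] by simp
      qed
      have A: "lam * pw r Fs w \<in> carrier_mat 1 r" using lamC pwC[OF w(1)] by simp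
      have Cc: "pw r Fs vv * gam \<in> carrier_mat r 1" using gamC pwC[OF vvk] by simp
      have "bil r x (?Fn n) y = (lam * pw r Fs w * ?Fn n * (pw r Fs vv * gam)) $$ (0,0)"
        unfolding w(2) vv(2) using trip[OF A FnC Cc] by simp
      also have "lam * pw r Fs w * ?Fn n * (pw r Fs vv * gam) = lam * pw r Fs (w @ ?ds @ vv) * gam"
      proof -
        have P1: "pw r Fs w \<in> carrier_mat r r" and P2: "pw r Fs ?ds \<in> carrier_mat r r"
          and P3: "pw r Fs vv \<in> carrier_mat r r" using pwC w(1) vvk bdk by auto
        show ?thesis unfolding pA mat_of_n_pw
          using assoc_mult_mat[OF A P2 Cc] assoc_mult_mat[OF lamC P1 mult_carrier_mat[OF P2 Cc]]
            assoc_mult_mat[OF P2 P3 gamC] assoc_mult_mat[OF P1 mult_carrier_mat[OF P2 P3] gamC]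
            assoc_mult_mat[OF lamC mult_carrier_mat[OF P1 mult_carrier_mat[OF P2 P3]] gamC]
          by simp
      qed
      also have "\<dots> = lam * mat_of_n k r Fs (m n) * gam" unfolding mat_of_n_pw bm ..
      finally show ?thesis using fn[of "m n"] by simp
    qed
    have "eventually (\<lambda>n. f (m n) = bil r x (?Fn n) y) at_top"
      unfolding eventually_at_top_linorder using eq by (intro exI[of _ 1] allI impI) (rule sym, blast)
    from iffD1[OF landau_o.big.in_cong[OF this] fm] show ?thesis .
  qed
  have dir2: "\<forall>i<r. \<forall>j<r. (\<lambda>n. ?Fn n $$ (i,j)) \<in> O(?h)" if f: "f \<in> O(?h)"
  proof (intro allI impI)
    fix i j assume i: "i < r" and j: "j < r"
    have s2: "V.span VRs \<subseteq> {y. (\<lambda>n. bil r x (?Fn n) y) \<in> O(?h)}" if x: "x \<in> VLs" for x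
    proof (rule V.span_minimal)
      show "VRs \<subseteq> {y. (\<lambda>n. bil r x (?Fn n) y) \<in> O(?h)}" using step1[OF f x] by blast
      show "V.subspace {y. (\<lambda>n. bil r x (?Fn n) y) \<in> O(?h)}"
        unfolding V.subspace_def
      proof (intro conjI ballI allI)
        show "0 \<in> {y. (\<lambda>n. bil r x (?Fn n) y) \<in> O(?h)}" by (simp add: bil_zero2)
      next
        fix y1 y2 assume "y1 \<in> {y. (\<lambda>n. bil r x (?Fn n) y) \<in> O(?h)}" "y2 \<in> {y. (\<lambda>n. bil r x (?Fn n) y) \<in> O(?h)}"
        hence "(\<lambda>n. bil r x (?Fn n) y1 + bil r x (?Fn n) y2) \<in> O(?h)" by (intro sum_in_bigo) auto
        thus "y1 + y2 \<in> {y. (\<lambda>n. bil r x (?Fn n) y) \<in> O(?h)}" by (simp add: bil_add2)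
      next
        fix c y1 assume "y1 \<in> {y. (\<lambda>n. bil r x (?Fn n) y) \<in> O(?h)}"
        hence "(\<lambda>n. c * bil r x (?Fn n) y1) \<in> O(?h)" by (intro cmult_O) auto
        thus "sc c y1 \<in> {y. (\<lambda>n. bil r x (?Fn n) y) \<in> O(?h)}" by (simp add: bil_sc2)
      qed
    qed
    have s3: "V.span VLs \<subseteq> {x. (\<lambda>n. bil r x (?Fn n) (ev j)) \<in> O(?h)}"
    proof (rule V.span_minimal)
      show "VLs \<subseteq> {x. (\<lambda>n. bil r x (?Fn n) (ev j)) \<in> O(?h)}" using s2 claimR[OF j] by blast
      show "V.subspace {x. (\<lambda>n. bil r x (?Fn n) (ev j)) \<in> O(?h)}"
        unfolding V.subspace_def
      proof (intro conjI ballI allI)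
        show "0 \<in> {x. (\<lambda>n. bil r x (?Fn n) (ev j)) \<in> O(?h)}" by (simp add: bil_zero1)
      next
        fix y1 y2 assume "y1 \<in> {x. (\<lambda>n. bil r x (?Fn n) (ev j)) \<in> O(?h)}" "y2 \<in> {x. (\<lambda>n. bil r x (?Fn n) (ev j)) \<in> O(?h)}"
        hence "(\<lambda>n. bil r y1 (?Fn n) (ev j) + bil r y2 (?Fn n) (ev j)) \<in> O(?h)" by (intro sum_in_bigo) auto
        thus "y1 + y2 \<in> {x. (\<lambda>n. bil r x (?Fn n) (ev j)) \<in> O(?h)}" by (simp add: bil_add1)
      next
        fix c y1 assume "y1 \<in> {x. (\<lambda>n. bil r x (?Fn n) (ev j)) \<in> O(?h)}"
        hence "(\<lambda>n. c * bil r y1 (?Fn n) (ev j)) \<in> O(?h)" by (intro cmult_O) auto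
        thus "sc c y1 \<in> {x. (\<lambda>n. bil r x (?Fn n) (ev j)) \<in> O(?h)}" by (simp add: bil_sc1)
      qed
    qed
    have "(\<lambda>n. bil r (ev i) (?Fn n) (ev j)) \<in> O(?h)" using s3 claimL[OF i] by blast
    thus "(\<lambda>n. ?Fn n $$ (i,j)) \<in> O(?h)" using bil_ev[OF i j] by simp
  qed
  show ?thesis using dir1 dir2 by blast
qed

end
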